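(* Let $q$ be a prime power and $n\ge 1$. Fix an identification of the $3n$-dimensional $\mathrm{GF}(q)$-vector space $\mathrm{GF}(q)^{3n}$ underlying $\mathrm{PG}(3n-1,q)$ with $\mathrm{GF}(q^n)^3$ regarded as a $\mathrm{GF}(q)$-vector space. Let $\widehat{\mathcal O}_1$ and $\widehat{\mathcal O}_2$ be ovals of $\mathrm{PG}(2,q^n)$ and let $\mathcal O_1$, $\mathcal O_2$ be the elementary $n$-dimensional pseudo-ovals of $\mathrm{PG}(3n-1,q)$ arising from $\widehat{\mathcal O}_1$ and $\widehat{\mathcal O}_2$, respectively. Then $\mathcal O_1$ and $\mathcal O_2$ are projectively equivalent (i.e. some element of $\mathrm{P\Gamma L}(3n,q)$ maps $\mathcal O_1$ onto $\mathcal O_2$) if and only if $\widehat{\mathcal O}_1$ and $\widehat{\mathcal O}_2$ are projectively equivalent (i.e. some element of $\mathrm{P\Gamma L}(3,q^n)$ maps $\widehat{\mathcal O}_1$ onto $\widehat{\mathcal O}_2$).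
   Context: An oval of $\mathrm{PG}(2,q)$ is a set of $q+1$ points, no three collinear. An $n$-dimensional pseudo-oval in $\mathrm{PG}(3n-1,q)$ is a set of $q^n+1$ projective $(n-1)$-dimensional subspaces any three of which span $\mathrm{PG}(3n-1,q)$. Under the identification $\mathrm{GF}(q)^{3n}\cong \mathrm{GF}(q^n)^3$, each point of $\mathrm{PG}(2,q^n)$ (a $1$-dimensional $\mathrm{GF}(q^n)$-subspace) is an $n$-dimensional $\mathrm{GF}(q)$-subspace, i.e. an $(n-1)$-dimensional subspace of $\mathrm{PG}(3n-1,q)$. The image of an oval of $\mathrm{PG}(2,q^n)$ under this correspondence is an $n$-dimensional pseudo-oval of $\mathrm{PG}(3n-1,q)$; pseudo-ovals obtained in this way are called elementary, and are said to arise from the oval. *)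

theory Defs
  imports Main
begin

text \<open>The field GF(q^n) is the finite field type 'a; GF(q) is a subfield K of it.
  Vectors of GF(q^n)^3 are triples.\<close>

type_synonym 'a vec3 = "'a \<times> 'a \<times> 'a"

definition vadd3 :: "'a::field vec3 \<Rightarrow> 'a vec3 \<Rightarrow> 'a vec3" where
  "vadd3 u v = (case u of (a,b,c) \<Rightarrow> case v of (d,e,f) \<Rightarrow> (a+d, b+e, c+f))"

definition smul3 :: "'a::field \<Rightarrow> 'a vec3 \<Rightarrow> 'a vec3" where
  "smul3 t v = (case v of (a,b,c) \<Rightarrow> (t*a, t*b, t*c))"

definition zero3 :: "'a::field vec3" where
  "zero3 = (0,0,0)"

definition subfield :: "'a::field set \<Rightarrow> bool" where
  "subfield K \<longleftrightarrow> 0 \<in> K \<and> 1 \<in> K \<and>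
     (\<forall>x\<in>K. \<forall>y\<in>K. x + y \<in> K \<and> x * y \<in> K \<and> x - y \<in> K) \<and>
     (\<forall>x\<in>K. x \<noteq> 0 \<longrightarrow> inverse x \<in> K)"

definition field_aut_on :: "'a::field set \<Rightarrow> ('a \<Rightarrow> 'a) \<Rightarrow> bool" where
  "field_aut_on K \<sigma> \<longleftrightarrow> bij_betw \<sigma> K K \<and>
     (\<forall>x\<in>K. \<forall>y\<in>K. \<sigma> (x + y) = \<sigma> x + \<sigma> y \<and> \<sigma> (x * y) = \<sigma> x * \<sigma> y)"

text \<open>Points of PG(2,F): one-dimensional F-subspaces of F^3 (as sets of vectors).\<close>
definition pg_point :: "'a::field vec3 \<Rightarrow> 'a vec3 set" where
  "pg_point v = {smul3 t v | t. True}"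

definition pg2_points :: "'a::field vec3 set set" where
  "pg2_points = {pg_point v | v. v \<noteq> zero3}"

text \<open>Three distinct points are non-collinear iff nonzero representatives are
  linearly independent over F.\<close>
definition noncollinear :: "'a::field vec3 set \<Rightarrow> 'a vec3 set \<Rightarrow> 'a vec3 set \<Rightarrow> bool" where
  "noncollinear P1 P2 P3 \<longleftrightarrow>
     (\<forall>v1\<in>P1. \<forall>v2\<in>P2. \<forall>v3\<in>P3. v1 \<noteq> zero3 \<longrightarrow> v2 \<noteq> zero3 \<longrightarrow> v3 \<noteq> zero3 \<longrightarrow>
        (\<forall>a b c. vadd3 (smul3 a v1) (vadd3 (smul3 b v2) (smul3 c v3)) = zero3
                   \<longrightarrow> a = 0 \<and> b = 0 \<and> c = 0))"

definition is_oval :: "'a::{field,finite} vec3 set set \<Rightarrow> bool" where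
  "is_oval Ov \<longleftrightarrow> Ov \<subseteq> pg2_points \<and> card Ov = card (UNIV :: 'a set) + 1 \<and>
     (\<forall>P1\<in>Ov. \<forall>P2\<in>Ov. \<forall>P3\<in>Ov. P1 \<noteq> P2 \<and> P1 \<noteq> P3 \<and> P2 \<noteq> P3 \<longrightarrow> noncollinear P1 P2 P3)"

text \<open>Elements of PGammaL(3,F): induced by F-semilinear bijections of F^3.\<close>
definition semilinear_F :: "('a::field vec3 \<Rightarrow> 'a vec3) \<Rightarrow> bool" where
  "semilinear_F g \<longleftrightarrow> bij g \<and> (\<forall>u v. g (vadd3 u v) = vadd3 (g u) (g v)) \<and>
     (\<exists>\<tau>. field_aut_on UNIV \<tau> \<and> (\<forall>t v. g (smul3 t v) = smul3 (\<tau> t) (g v)))"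

text \<open>The GF(q)-vector space GF(q)^(3n), vectors as functions nat => 'a supported on {0..<3n}
  with values in K.\<close>
definition Kspace :: "'a::field set \<Rightarrow> nat \<Rightarrow> (nat \<Rightarrow> 'a) set" where
  "Kspace K m = {w. (\<forall>i<m. w i \<in> K) \<and> (\<forall>i\<ge>m. w i = 0)}"

text \<open>Elements of PGammaL(3n,q): induced by K-semilinear bijections of K^(3n).\<close>
definition semilinear_K :: "'a::field set \<Rightarrow> nat \<Rightarrow> ((nat \<Rightarrow> 'a) \<Rightarrow> (nat \<Rightarrow> 'a)) \<Rightarrow> bool" where
  "semilinear_K K m f \<longleftrightarrow> bij_betw f (Kspace K m) (Kspace K m) \<and>
     (\<forall>u\<in>Kspace K m. \<forall>v\<in>Kspace K m. f (\<lambda>i. u i + v i) = (\<lambda>i. f u i + f v i)) \<and>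
     (\<exists>\<sigma>. field_aut_on K \<sigma> \<and>
        (\<forall>t\<in>K. \<forall>v\<in>Kspace K m. f (\<lambda>i. t * v i) = (\<lambda>i. \<sigma> t * f v i)))"

definition identification :: "'a::field set \<Rightarrow> nat \<Rightarrow> ('a vec3 \<Rightarrow> (nat \<Rightarrow> 'a)) \<Rightarrow> bool" where
  "identification K n \<phi> \<longleftrightarrow> bij_betw \<phi> UNIV (Kspace K (3*n)) \<and>
     (\<forall>u v. \<phi> (vadd3 u v) = (\<lambda>i. \<phi> u i + \<phi> v i)) \<and>
     (\<forall>t\<in>K. \<forall>v. \<phi> (smul3 t v) = (\<lambda>i. t * \<phi> v i))"

definition elementary :: "('a vec3 \<Rightarrow> (nat \<Rightarrow> 'a)) \<Rightarrow> 'a vec3 set set \<Rightarrow> (nat \<Rightarrow> 'a) set set" where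
  "elementary \<phi> Ov = (\<lambda>P. \<phi> ` P) ` Ov"

end

theory Submission
  imports Defs "HOL-Computational_Algebra.Polynomial"
begin


lemma vadd3_simp[simp]: "vadd3 (a,b,c) (d,e,f) = (a+d,b+e,c+f)" by (simp add: vadd3_def)
lemma smul3_simp[simp]: "smul3 t (a,b,c) = (t*a,t*b,t*c)" by (simp add: smul3_def)

definition lin3 :: "'a::field vec3 \<Rightarrow> 'a vec3 \<Rightarrow> 'a vec3 \<Rightarrow> 'a \<Rightarrow> 'a \<Rightarrow> 'a \<Rightarrow> 'a vec3" where
  "lin3 v1 v2 v3 a b c = vadd3 (smul3 a v1) (vadd3 (smul3 b v2) (smul3 c v3))"

definition indep3 :: "'a::field vec3 \<Rightarrow> 'a vec3 \<Rightarrow> 'a vec3 \<Rightarrow> bool" where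
  "indep3 v1 v2 v3 \<longleftrightarrow> (\<forall>a b c. lin3 v1 v2 v3 a b c = zero3 \<longrightarrow> a = 0 \<and> b = 0 \<and> c = 0)"

lemma vadd3_comm: "vadd3 u v = vadd3 v u"
  by (cases u; cases v) (simp add: add.commute)
lemma vadd3_assoc: "vadd3 (vadd3 u v) w = vadd3 u (vadd3 v w)"
  by (cases u; cases v; cases w) (simp add: add.assoc)
lemma vadd3_zero[simp]: "vadd3 u zero3 = u" "vadd3 zero3 u = u"
  by (cases u; simp add: zero3_def)+
lemma smul3_add: "smul3 (s+t) v = vadd3 (smul3 s v) (smul3 t v)"
  by (cases v) (simp add: distrib_right)
lemma smul3_vadd: "smul3 t (vadd3 u v) = vadd3 (smul3 t u) (smul3 t v)"
  by (cases u; cases v) (simp add: distrib_left)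
lemma smul3_smul3: "smul3 s (smul3 t v) = smul3 (s*t) v"
  by (cases v) (simp add: mult.assoc)
lemma smul3_one[simp]: "smul3 1 v = v"
  by (cases v) simp
lemma smul3_zero[simp]: "smul3 0 v = zero3" "smul3 t zero3 = zero3"
  by (cases v; simp add: zero3_def)+
lemma smul3_eq_zero_iff: "smul3 t v = zero3 \<longleftrightarrow> t = 0 \<or> v = zero3"
  by (cases v) (auto simp add: zero3_def)
lemma smul3_cancel: "v \<noteq> zero3 \<Longrightarrow> smul3 s v = smul3 t v \<Longrightarrow> s = t"
  by (cases v) (auto simp add: zero3_def)

lemma lin3_add: "vadd3 (lin3 v1 v2 v3 a b c) (lin3 v1 v2 v3 a' b' c') = lin3 v1 v2 v3 (a+a') (b+b') (c+c')"
  by (cases v1; cases v2; cases v3) (simp add: lin3_def algebra_simps)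
lemma lin3_smul: "smul3 t (lin3 v1 v2 v3 a b c) = lin3 v1 v2 v3 (t*a) (t*b) (t*c)"
  by (cases v1; cases v2; cases v3) (simp add: lin3_def algebra_simps)

lemma indep3_inj:
  assumes "indep3 v1 v2 v3" "lin3 v1 v2 v3 a b c = lin3 v1 v2 v3 a' b' c'"
  shows "a = a' \<and> b = b' \<and> c = c'"
proof -
  have "lin3 v1 v2 v3 (a-a') (b-b') (c-c') = zero3"
    using assms(2) by (cases v1; cases v2; cases v3) (simp add: lin3_def zero3_def algebra_simps)
  thus ?thesis using assms(1) unfolding indep3_def by (metis eq_iff_diff_eq_0)
qed

lemma indep3_surj:
  fixes v1 :: "'a::{field,finite} vec3"
  assumes "indep3 v1 v2 v3"
  shows "\<exists>a b c. u = lin3 v1 v2 v3 a b c"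
proof -
  let ?L = "\<lambda>(a::'a,b::'a,c::'a). lin3 v1 v2 v3 a b c"
  have "inj ?L" using indep3_inj[OF assms] by (auto simp: inj_def)
  hence "surj ?L" by (rule finite_UNIV_inj_surj[rotated]) (simp add: finite_prod)
  then obtain x where "u = ?L x" by (metis surjD)
  thus ?thesis by (cases x) auto
qed

lemma lin3_zero_iff: "indep3 v1 v2 v3 \<Longrightarrow> lin3 v1 v2 v3 a b c = zero3 \<longleftrightarrow> a = 0 \<and> b = 0 \<and> c = 0"
  unfolding indep3_def by (auto simp: lin3_def)

lemma noncollinear_indep3:
  "noncollinear P1 P2 P3 \<Longrightarrow> v1 \<in> P1 \<Longrightarrow> v2 \<in> P2 \<Longrightarrow> v3 \<in> P3 \<Longrightarrow> v1 \<noteq> zero3 \<Longrightarrow> v2 \<noteq> zero3 \<Longrightarrow> v3 \<noteq> zero3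
   \<Longrightarrow> indep3 v1 v2 v3"
  unfolding noncollinear_def indep3_def lin3_def by blast

lemma pg_point_mult: "x \<in> pg_point u \<Longrightarrow> x \<noteq> zero3 \<Longrightarrow> y \<in> pg_point u \<Longrightarrow> \<exists>s. y = smul3 s x"
proof -
  assume a: "x \<in> pg_point u" "x \<noteq> zero3" "y \<in> pg_point u"
  then obtain t r where t: "x = smul3 t u" "y = smul3 r u" by (auto simp: pg_point_def)
  with a have "t \<noteq> 0" by auto
  have "y = smul3 (r / t) x" using t \<open>t \<noteq> 0\<close> by (simp add: smul3_smul3)
  thus ?thesis by blast
qed

lemma pg_point_closed: "x \<in> pg_point u \<Longrightarrow> smul3 s x \<in> pg_point u"
  by (auto simp: pg_point_def smul3_smul3)


lemma oval_finite: "is_oval Ov \<Longrightarrow> finite Ov"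
  unfolding is_oval_def by (metis card.infinite add_is_0 zero_neq_one)

lemma oval_point: "is_oval Ov \<Longrightarrow> P \<in> Ov \<Longrightarrow> \<exists>u. u \<noteq> zero3 \<and> P = pg_point u"
  unfolding is_oval_def pg2_points_def by blast

lemma oval_indep:
  "is_oval Ov \<Longrightarrow> P1 \<in> Ov \<Longrightarrow> P2 \<in> Ov \<Longrightarrow> P3 \<in> Ov \<Longrightarrow> P1 \<noteq> P2 \<Longrightarrow> P1 \<noteq> P3 \<Longrightarrow> P2 \<noteq> P3 \<Longrightarrow>
   v1 \<in> P1 \<Longrightarrow> v2 \<in> P2 \<Longrightarrow> v3 \<in> P3 \<Longrightarrow> v1 \<noteq> zero3 \<Longrightarrow> v2 \<noteq> zero3 \<Longrightarrow> v3 \<noteq> zero3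
   \<Longrightarrow> indep3 v1 v2 v3"
  unfolding is_oval_def by (metis noncollinear_indep3)

lemma pg_point_self: "u \<in> pg_point u"
  unfolding pg_point_def by (metis (mono_tags) mem_Collect_eq smul3_one)

lemma oval_mult: "is_oval Ov \<Longrightarrow> Q \<in> Ov \<Longrightarrow> x \<in> Q \<Longrightarrow> x \<noteq> zero3 \<Longrightarrow> y \<in> Q \<Longrightarrow> \<exists>s. y = smul3 s x"
  by (metis oval_point pg_point_mult)

lemma oval_closed: "is_oval Ov \<Longrightarrow> Q \<in> Ov \<Longrightarrow> x \<in> Q \<Longrightarrow> smul3 s x \<in> Q"
  by (metis oval_point pg_point_closed)



lemma core:
  fixes h :: "'a::{field,finite} vec3 \<Rightarrow> 'a vec3"
  assumes hbij: "bij h" and hadd: "\<And>u v. h (vadd3 u v) = vadd3 (h u) (h v)"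
    and img: "(\<lambda>P. h ` P) ` O1 = O2" and ov1: "is_oval O1" and ov2: "is_oval O2"
  shows "\<exists>\<tau>. field_aut_on UNIV \<tau> \<and> (\<forall>t v. h (smul3 t v) = smul3 (\<tau> t) (h v))"
proof -
  have hinj: "inj h" using hbij bij_is_inj by blast
  have h0: "h zero3 = zero3"
  proof -
    have "h zero3 = vadd3 (h zero3) (h zero3)" using hadd[of zero3 zero3] by simp
    thus ?thesis by (cases "h zero3") (simp only: zero3_def vadd3_simp prod.inject add_cancel_right_right)
  qed
  have hnz: "h x \<noteq> zero3" if "x \<noteq> zero3" for x
    using that h0 hinj by (metis injD)
  have himg: "h ` P \<in> O2" if "P \<in> O1" for P using img that by blast
  have himginj: "h ` P = h ` P' \<Longrightarrow> P = P'" for P P'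
    using hinj by (simp add: inj_image_eq_iff)
  define N where "N = card (UNIV :: 'a set)"
  have N2: "N \<ge> 2"
  proof -
    have "card {0::'a, 1} \<le> N" unfolding N_def by (rule card_mono) auto
    thus ?thesis by simp
  qed
  have cardO1: "card O1 = N + 1" using ov1 unfolding is_oval_def N_def by simp
  have finO1: "finite O1" using ov1 by (rule oval_finite)
  show ?thesis
  proof (cases "N = 2")
    case True
    have "UNIV = {0::'a, 1}"
      by (rule card_subset_eq[symmetric]) (use True in \<open>auto simp: N_def\<close>)
    hence "\<forall>t::'a. t = 0 \<or> t = 1" by auto
    hence "\<forall>t v. h (smul3 t v) = smul3 t (h v)" using h0 by (metis smul3_one smul3_zero)
    moreover have "field_aut_on UNIV id" unfolding field_aut_on_def by simp
    ultimately show ?thesis by (metis id_apply)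
  next
    case False
    hence N3: "N \<ge> 3" using N2 by simp
    have "Suc (Suc (Suc (Suc 0))) \<le> card O1" using cardO1 N3 by simp
    then obtain P1 P2 P3 P4 where P: "P1 \<in> O1" "P2 \<in> O1" "P3 \<in> O1" "P4 \<in> O1"
      and dist: "P1 \<noteq> P2" "P1 \<noteq> P3" "P1 \<noteq> P4" "P2 \<noteq> P3" "P2 \<noteq> P4" "P3 \<noteq> P4"
      unfolding card_le_Suc_iff by auto
    obtain u1 u2 u3 u4 where u: "u1 \<noteq> zero3" "P1 = pg_point u1" "u2 \<noteq> zero3" "P2 = pg_point u2"
      "u3 \<noteq> zero3" "P3 = pg_point u3" "u4 \<noteq> zero3" "P4 = pg_point u4"
      using oval_point[OF ov1] P by metis
    have uin: "u1 \<in> P1" "u2 \<in> P2" "u3 \<in> P3" "u4 \<in> P4" unfolding u(2,4,6,8) by (rule pg_point_self)+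
    have i123: "indep3 u1 u2 u3" by (rule oval_indep[OF ov1 P(1-3) dist(1,2,4) uin(1-3) u(1,3,5)])
    obtain a b c where abc: "u4 = lin3 u1 u2 u3 a b c" using indep3_surj[OF i123] by blast
    have "c \<noteq> 0"
    proof
      assume "c = 0"
      have i: "indep3 u1 u2 u4" by (rule oval_indep[OF ov1 P(1,2,4) dist(1,3,5) uin(1,2,4) u(1,3,7)])
      have "lin3 u1 u2 u4 a b (-1) = zero3" using abc \<open>c = 0\<close>
        by (cases u1; cases u2; cases u3) (simp add: lin3_def zero3_def)
      thus False using i by (simp add: lin3_zero_iff)
    qed
    have "b \<noteq> 0"
    proof
      assume "b = 0"
      have i: "indep3 u1 u3 u4" by (rule oval_indep[OF ov1 P(1,3,4) dist(2,3,6) uin(1,3,4) u(1,5,7)])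
      have "lin3 u1 u3 u4 a c (-1) = zero3" using abc \<open>b = 0\<close>
        by (cases u1; cases u2; cases u3) (simp add: lin3_def zero3_def)
      thus False using i by (simp add: lin3_zero_iff)
    qed
    have "a \<noteq> 0"
    proof
      assume "a = 0"
      have i: "indep3 u2 u3 u4" by (rule oval_indep[OF ov1 P(2,3,4) dist(4,5,6) uin(2,3,4) u(3,5,7)])
      have "lin3 u2 u3 u4 b c (-1) = zero3" using abc \<open>a = 0\<close>
        by (cases u1; cases u2; cases u3) (simp add: lin3_def zero3_def)
      thus False using i by (simp add: lin3_zero_iff)
    qed
    define v1 v2 v3 where "v1 = smul3 a u1" "v2 = smul3 b u2" "v3 = smul3 c u3"
    have vin: "v1 \<in> P1" "v2 \<in> P2" "v3 \<in> P3"
      unfolding v1_v2_v3_def using u pg_point_closed pg_point_self by metis+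
    have vnz: "v1 \<noteq> zero3" "v2 \<noteq> zero3" "v3 \<noteq> zero3"
      unfolding v1_v2_v3_def using u \<open>a\<noteq>0\<close> \<open>b\<noteq>0\<close> \<open>c\<noteq>0\<close> by (auto simp: smul3_eq_zero_iff)
    have iv: "indep3 v1 v2 v3" by (rule oval_indep[OF ov1 P(1-3) dist(1,2,4) vin vnz])
    have u4v: "u4 = vadd3 v1 (vadd3 v2 v3)" using abc unfolding v1_v2_v3_def lin3_def by simp
    define w1 w2 w3 where "w1 = h v1" "w2 = h v2" "w3 = h v3"
    have Q: "h ` P1 \<in> O2" "h ` P2 \<in> O2" "h ` P3 \<in> O2" "h ` P4 \<in> O2" using himg P by auto
    have win: "w1 \<in> h ` P1" "w2 \<in> h ` P2" "w3 \<in> h ` P3" unfolding w1_w2_w3_def using vin by auto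
    have wnz: "w1 \<noteq> zero3" "w2 \<noteq> zero3" "w3 \<noteq> zero3" unfolding w1_w2_w3_def using vnz hnz by auto
    have iw: "indep3 w1 w2 w3"
      by (rule oval_indep[OF ov2 Q(1-3) _ _ _ win wnz]) (use dist himginj in metis)+
    have "\<exists>s. h (smul3 t v1) = smul3 s w1" for t
      by (rule oval_mult[OF ov2 Q(1) win(1) wnz(1)]) (use vin oval_closed[OF ov1 P(1)] in blast)
    then obtain \<tau> where tau1: "\<And>t. h (smul3 t v1) = smul3 (\<tau> t) w1" by metis
    have tau23: "h (smul3 t v2) = smul3 (\<tau> t) w2 \<and> h (smul3 t v3) = smul3 (\<tau> t) w3" for t
    proof -
      obtain s2 where s2: "h (smul3 t v2) = smul3 s2 w2"
        using oval_mult[OF ov2 Q(2) win(2) wnz(2)] vin oval_closed[OF ov1 P(2)] by blast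
      obtain s3 where s3: "h (smul3 t v3) = smul3 s3 w3"
        using oval_mult[OF ov2 Q(3) win(3) wnz(3)] vin oval_closed[OF ov1 P(3)] by blast
      have w4: "h u4 \<in> h ` P4" "h u4 \<noteq> zero3" using uin u hnz by auto
      obtain s4 where s4: "h (smul3 t u4) = smul3 s4 (h u4)"
        using oval_mult[OF ov2 Q(4) w4] uin oval_closed[OF ov1 P(4)] by blast
      have "h u4 = vadd3 w1 (vadd3 w2 w3)" unfolding w1_w2_w3_def u4v hadd ..
      hence e1: "h (smul3 t u4) = lin3 w1 w2 w3 s4 s4 s4" using s4 by (simp add: lin3_def smul3_vadd)
      have "h (smul3 t u4) = lin3 w1 w2 w3 (\<tau> t) s2 s3"
        unfolding u4v smul3_vadd hadd tau1 s2 s3 lin3_def ..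
      with e1 have "\<tau> t = s4 \<and> s2 = s4 \<and> s3 = s4" using indep3_inj[OF iw] by metis
      thus ?thesis using s2 s3 by simp
    qed
    have hl: "h (lin3 v1 v2 v3 x y z) = lin3 w1 w2 w3 (\<tau> x) (\<tau> y) (\<tau> z)" for x y z
      by (simp only: lin3_def hadd tau1 tau23)
    have tadd: "\<tau> (s + t) = \<tau> s + \<tau> t" for s t
    proof -
      have "smul3 (\<tau> (s+t)) w1 = smul3 (\<tau> s + \<tau> t) w1"
        by (metis smul3_add hadd tau1)
      thus ?thesis using smul3_cancel wnz(1) by blast
    qed
    have t1: "\<tau> 1 = 1"
    proof -
      have "smul3 (\<tau> 1) w1 = smul3 1 w1" using tau1[of 1] unfolding w1_w2_w3_def by simp
      thus ?thesis using smul3_cancel wnz(1) by blast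
    qed
    have t0: "\<tau> 0 = 0" using tadd[of 0 0] by (simp only: add_0 add_cancel_right_right)
    have tneg: "\<tau> (- s) = - \<tau> s" for s using tadd[of s "-s"] t0 by (simp add: eq_neg_iff_add_eq_0 add.commute)
    have tinj: "inj \<tau>"
    proof (rule injI)
      fix s t assume "\<tau> s = \<tau> t"
      hence "h (smul3 s v1) = h (smul3 t v1)" using tau1 by simp
      hence "smul3 s v1 = smul3 t v1" using hinj by (simp add: inj_eq)
      thus "s = t" using smul3_cancel vnz(1) by blast
    qed
    define M where "M = {z. \<forall>c. \<tau> (c * z) = \<tau> c * \<tau> z}"
    have M0: "0 \<in> M" unfolding M_def using t0 by simp
    have Madd: "x + y \<in> M" if "x \<in> M" "y \<in> M" for x y
      using that unfolding M_def by (simp add: distrib_left tadd)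
    have Mneg: "- x \<in> M" if "x \<in> M" for x
      using that unfolding M_def by (simp add: tneg)
    have norm: "\<exists>y z. lin3 v1 v2 v3 1 y z \<in> P" if PO: "P \<in> O1" "P \<noteq> P2" "P \<noteq> P3" for P
    proof -
      obtain u where uP: "u \<noteq> zero3" "P = pg_point u" using oval_point[OF ov1 PO(1)] by blast
      obtain x y z where xyz: "u = lin3 v1 v2 v3 x y z" using indep3_surj[OF iv] by blast
      have "x \<noteq> 0"
      proof
        assume "x = 0"
        have i: "indep3 u v2 v3"
          by (rule oval_indep[OF ov1 PO(1) P(2,3) PO(2,3) dist(4) pg_point_self[of u, folded uP(2)] vin(2,3) uP(1) vnz(2,3)])
        have "lin3 u v2 v3 1 (-y) (-z) = zero3" using xyz \<open>x = 0\<close>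
          by (cases v1; cases v2; cases v3) (simp add: lin3_def zero3_def)
        thus False using i by (simp add: lin3_zero_iff)
      qed
      have "smul3 (1/x) u \<in> P" using uP pg_point_closed pg_point_self by metis
      moreover have "smul3 (1/x) u = lin3 v1 v2 v3 1 (y/x) (z/x)"
        using xyz \<open>x \<noteq> 0\<close> by (simp add: lin3_smul)
      ultimately show ?thesis by metis
    qed
    have inM: "z \<in> M" if PO: "P \<in> O1" and yz: "lin3 v1 v2 v3 1 y z \<in> P" for P y z
    proof -
      let ?u = "lin3 v1 v2 v3 1 y z"
      have unz: "h ?u \<noteq> zero3" using hnz lin3_zero_iff[OF iv] by simp
      have hu: "h ?u \<in> h ` P" using yz by simp
      show ?thesis unfolding M_def
      proof (rule CollectI, rule allI)
        fix c
        have "h (smul3 c ?u) \<in> h ` P" using oval_closed[OF ov1 PO yz] by simp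
        then obtain l where "h (smul3 c ?u) = smul3 l (h ?u)"
          using oval_mult[OF ov2 himg[OF PO] hu unz] by blast
        hence "lin3 w1 w2 w3 (\<tau> c) (\<tau> (c*y)) (\<tau> (c*z)) = lin3 w1 w2 w3 l (l * \<tau> y) (l * \<tau> z)"
          by (simp add: lin3_smul hl t1)
        hence "\<tau> c = l \<and> \<tau> (c*z) = l * \<tau> z" using indep3_inj[OF iw] by blast
        thus "\<tau> (c * z) = \<tau> c * \<tau> z" by simp
      qed
    qed
    define S where "S = O1 - {P2, P3}"
    define \<zeta> where "\<zeta> P = (SOME z. \<exists>y. lin3 v1 v2 v3 1 y z \<in> P)" for P
    have zeta: "\<exists>y. lin3 v1 v2 v3 1 y (\<zeta> P) \<in> P" if "P \<in> S" for P
    proof -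
      have "P \<in> O1" "P \<noteq> P2" "P \<noteq> P3" using that unfolding S_def by blast+
      hence "\<exists>z y. lin3 v1 v2 v3 1 y z \<in> P" using norm by blast
      hence "\<exists>z. \<exists>y. lin3 v1 v2 v3 1 y z \<in> P" by blast
      thus ?thesis unfolding \<zeta>_def by (rule someI_ex)
    qed
    have zM: "\<zeta> ` S \<subseteq> M" using zeta inM unfolding S_def by blast
    have zinj: "inj_on \<zeta> S"
    proof (rule inj_onI, rule ccontr)
      fix P P' assume PS: "P \<in> S" "P' \<in> S" and eq: "\<zeta> P = \<zeta> P'" and ne: "P \<noteq> P'"
      obtain y where y: "lin3 v1 v2 v3 1 y (\<zeta> P) \<in> P" using zeta PS by blast
      obtain y' where y': "lin3 v1 v2 v3 1 y' (\<zeta> P) \<in> P'" using zeta PS eq by metis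
      have i: "indep3 (lin3 v1 v2 v3 1 y (\<zeta> P)) (lin3 v1 v2 v3 1 y' (\<zeta> P)) v2"
        by (rule oval_indep[OF ov1 _ _ P(2) ne _ _ y y' vin(2)])
           (use PS lin3_zero_iff[OF iv] vnz in \<open>auto simp: S_def\<close>)
      have "lin3 (lin3 v1 v2 v3 1 y (\<zeta> P)) (lin3 v1 v2 v3 1 y' (\<zeta> P)) v2 1 (-1) (y'-y) = zero3"
        by (cases v1; cases v2; cases v3) (simp add: lin3_def zero3_def algebra_simps)
      thus False using i by (simp add: lin3_zero_iff)
    qed
    have "card S = N - 1" unfolding S_def using cardO1 finO1 P(2,3) dist(4) by simp
    hence cM: "N - 1 \<le> card M"
      using card_inj_on_le[OF zinj zM] by simp
    have MU: "M = UNIV"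
    proof (rule ccontr)
      assume "M \<noteq> UNIV"
      then obtain x where x: "x \<notin> M" by blast
      have disj: "M \<inter> (\<lambda>m. x + m) ` M = {}"
      proof (rule ccontr)
        assume "M \<inter> (\<lambda>m. x + m) ` M \<noteq> {}"
        then obtain m where m: "m \<in> M" "x + m \<in> M" by blast
        hence "(x + m) + (- m) \<in> M" using Madd Mneg by blast
        thus False using x by simp
      qed
      have "card (M \<union> (\<lambda>m. x + m) ` M) = card M + card ((\<lambda>m. x + m) ` M)"
        by (rule card_Un_disjoint) (use disj in auto)
      also have "card ((\<lambda>m. x + m) ` M) = card M" by (rule card_image) (simp add: inj_on_def)
      finally have "card M + card M \<le> N" unfolding N_def by (metis card_mono finite_UNIV subset_UNIV)
      thus False using cM N3 by simp
    qed
    have tmul: "\<tau> (c * z) = \<tau> c * \<tau> z" for c z using MU unfolding M_def by blast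
    have "surj \<tau>" using tinj finite_UNIV_inj_surj[OF finite_UNIV] by blast
    hence "field_aut_on UNIV \<tau>" unfolding field_aut_on_def using tinj tadd tmul
      by (simp add: bij_def)
    moreover have "h (smul3 t v) = smul3 (\<tau> t) (h v)" for t v
    proof -
      obtain x y z where v: "v = lin3 v1 v2 v3 x y z" using indep3_surj[OF iv] by blast
      show ?thesis unfolding v lin3_smul hl by (simp add: tmul)
    qed
    ultimately show ?thesis by blast
  qed
qed



lemma subfield_pow_card:
  fixes K :: "'a::{field,finite} set"
  assumes sf: "subfield K" and x: "x \<in> K"
  shows "x ^ card K = x"
proof (cases "x = 0")
  case True
  have "card K \<noteq> 0" using x by (auto simp add: card_eq_0_iff)
  hence "0 < card K" by linarith
  thus ?thesis using True by (simp add: zero_power)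
next
  case False
  define K' where "K' = K - {0}"
  have fin: "finite K'" by simp
  have xK': "x \<in> K'" using x False unfolding K'_def by simp
  have mapsto: "x * y \<in> K'" if "y \<in> K'" for y
    using that xK' sf unfolding K'_def subfield_def by auto
  have inj: "inj_on (\<lambda>y. x * y) K'" using False by (auto simp: inj_on_def)
  have img: "(\<lambda>y. x * y) ` K' = K'"
    using mapsto inj by (intro card_subset_eq[OF fin]) (auto simp: card_image)
  have "prod (\<lambda>y. y) K' = prod (\<lambda>y. y) ((\<lambda>y. x * y) ` K')" using img by simp
  also have "\<dots> = prod (\<lambda>y. x * y) K'" using prod.reindex[OF inj] by simp
  also have "\<dots> = x ^ card K' * prod (\<lambda>y. y) K'" by (simp add: prod.distrib)
  finally have e: "prod (\<lambda>y. y) K' = x ^ card K' * prod (\<lambda>y. y) K'" .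
  have "prod (\<lambda>y. y) K' \<noteq> 0" unfolding K'_def by simp
  with e have "x ^ card K' = 1" by simp
  moreover have "card K = Suc (card K')"
  proof -
    have fK: "finite K" by (rule finite_subset[OF subset_UNIV finite_UNIV])
    have "0 \<in> K" using sf unfolding subfield_def by blast
    show ?thesis unfolding K'_def by (rule card_Suc_Diff1[OF fK \<open>0 \<in> K\<close>, symmetric])
  qed
  ultimately show ?thesis by simp
qed

lemma roots_card:
  fixes q :: nat
  assumes "q \<ge> 2"
  shows "card {x::'a::field. x ^ q = x} \<le> q"
proof -
  define p :: "'a poly" where "p = monom 1 q - [:0, 1:]"
  have dm: "degree (monom (1::'a) q) = q" by (simp add: degree_monom_eq)
  have dl: "degree [:0::'a, 1:] = 1" by simp
  have dp: "degree p = q" unfolding p_def diff_conv_add_uminus using dm dl assms by (subst degree_add_eq_left) auto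
  have "p \<noteq> 0" using dp assms by auto
  hence "card {x. poly p x = 0} \<le> q" using card_poly_roots_bound dp by metis
  moreover have "{x. poly p x = 0} = {x. x ^ q = x}" unfolding p_def by (auto simp: poly_monom)
  ultimately show ?thesis by simp
qed

lemma aut_power: "field_aut_on UNIV \<tau> \<Longrightarrow> \<tau> ((x::'a::field) ^ n) = \<tau> x ^ n"
proof -
  assume a: "field_aut_on UNIV \<tau>"
  have "\<tau> 1 = 1"
  proof -
    obtain y where "\<tau> y = 1" using a unfolding field_aut_on_def by (metis bij_betw_iff_bijections UNIV_I)
    moreover have "\<tau> (1 * y) = \<tau> 1 * \<tau> y" using a unfolding field_aut_on_def by blast
    ultimately show ?thesis by simp
  qed
  thus ?thesis using a unfolding field_aut_on_def by (induction n) auto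
qed

lemma aut_subfield:
  fixes K :: "'a::{field,finite} set"
  assumes sf: "subfield K" and a: "field_aut_on UNIV \<tau>"
  shows "field_aut_on K \<tau>"
proof -
  define q where "q = card K"
  have q2: "q \<ge> 2"
  proof -
    have "{0,1} \<subseteq> K" using sf unfolding subfield_def by auto
    hence "card {0::'a,1} \<le> q" unfolding q_def by (intro card_mono) auto
    thus ?thesis by simp
  qed
  define R where "R = {x::'a. x ^ q = x}"
  have KR: "K \<subseteq> R" unfolding R_def q_def using subfield_pow_card[OF sf] by blast
  have inj: "inj \<tau>" using a unfolding field_aut_on_def bij_betw_def by blast
  have TR: "\<tau> ` K \<subseteq> R" using KR unfolding R_def by (auto simp: aut_power[OF a, symmetric])
  have cR: "card R \<le> q" unfolding R_def by (rule roots_card[OF q2])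
  have "K = R" by (rule card_subset_eq) (use KR cR in \<open>auto simp: q_def intro!: antisym card_mono\<close>)
  moreover have "\<tau> ` K = R"
    by (rule card_subset_eq) (use TR cR inj KR in \<open>auto simp: q_def card_image inj_on_subset intro!: antisym card_mono\<close>)
  ultimately have "\<tau> ` K = K" by simp
  hence "bij_betw \<tau> K K" using inj by (metis bij_betw_def inj_on_subset subset_UNIV)
  thus ?thesis using a unfolding field_aut_on_def by blast
qed



theorem proposition1:
  fixes K :: "'a::{field,finite} set" and n :: nat
    and \<phi> :: "'a vec3 \<Rightarrow> (nat \<Rightarrow> 'a)"
    and O1 O2 :: "'a vec3 set set"
  assumes "subfield K" and "n \<ge> 1" and "card (UNIV :: 'a set) = card K ^ n"
    and "identification K n \<phi>"
    and "is_oval O1" and "is_oval O2"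
  shows "(\<exists>f. semilinear_K K (3*n) f \<and> (\<lambda>P. f ` P) ` elementary \<phi> O1 = elementary \<phi> O2)
     \<longleftrightarrow> (\<exists>g. semilinear_F g \<and> (\<lambda>P. g ` P) ` O1 = O2)"
proof -
  let ?V = "Kspace K (3*n)"
  define \<psi> where "\<psi> = inv_into UNIV \<phi>"
  have phibij: "bij_betw \<phi> UNIV ?V" and phiadd: "\<And>u v. \<phi> (vadd3 u v) = (\<lambda>i. \<phi> u i + \<phi> v i)"
    and phism: "\<And>t v. t \<in> K \<Longrightarrow> \<phi> (smul3 t v) = (\<lambda>i. t * \<phi> v i)"
    using assms(4) unfolding identification_def by auto
  have phiinj: "inj \<phi>" using phibij bij_betw_def by blast
  have psiphi[simp]: "\<psi> (\<phi> v) = v" for v unfolding \<psi>_def using phiinj by simp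
  have phipsi: "w \<in> ?V \<Longrightarrow> \<phi> (\<psi> w) = w" for w
    unfolding \<psi>_def using phibij by (metis bij_betw_def f_inv_into_f)
  have phiV: "\<phi> v \<in> ?V" for v using phibij bij_betwE by blast
  have psibij: "bij_betw \<psi> ?V UNIV" unfolding \<psi>_def using phibij by (rule bij_betw_inv_into)
  show ?thesis
  proof
    assume "\<exists>f. semilinear_K K (3*n) f \<and> (\<lambda>P. f ` P) ` elementary \<phi> O1 = elementary \<phi> O2"
    then obtain f where sf: "semilinear_K K (3*n) f"
      and fim: "(\<lambda>P. f ` P) ` elementary \<phi> O1 = elementary \<phi> O2" by blast
    have fbij: "bij_betw f ?V ?V" and fadd: "\<And>u v. u \<in> ?V \<Longrightarrow> v \<in> ?V \<Longrightarrow> f (\<lambda>i. u i + v i) = (\<lambda>i. f u i + f v i)"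
      using sf unfolding semilinear_K_def by auto
    define h where "h v = \<psi> (f (\<phi> v))" for v
    have fV: "f w \<in> ?V" if "w \<in> ?V" for w using fbij that bij_betwE by blast
    have hbij: "bij h"
    proof -
      have "bij_betw (\<psi> \<circ> (f \<circ> \<phi>)) UNIV UNIV"
        by (rule bij_betw_trans[OF bij_betw_trans[OF phibij fbij] psibij])
      moreover have "\<psi> \<circ> (f \<circ> \<phi>) = h" unfolding h_def by (simp add: fun_eq_iff)
      ultimately show ?thesis by simp
    qed
    have hadd: "h (vadd3 u v) = vadd3 (h u) (h v)" for u v
    proof -
      have "f (\<phi> (vadd3 u v)) = (\<lambda>i. f (\<phi> u) i + f (\<phi> v) i)" unfolding phiadd by (rule fadd[OF phiV phiV])
      also have "\<dots> = (\<lambda>i. \<phi> (h u) i + \<phi> (h v) i)" unfolding h_def using phipsi fV phiV by simp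
      also have "\<dots> = \<phi> (vadd3 (h u) (h v))" by (simp add: phiadd)
      finally show ?thesis unfolding h_def by simp
    qed
    have himg: "(\<lambda>P. h ` P) ` O1 = O2"
    proof -
      have "(\<lambda>S. \<psi> ` S) ` ((\<lambda>P. f ` P) ` elementary \<phi> O1) = (\<lambda>S. \<psi> ` S) ` elementary \<phi> O2"
        using fim by simp
      moreover have "(\<lambda>S. \<psi> ` S) ` ((\<lambda>P. f ` P) ` elementary \<phi> O1) = (\<lambda>P. h ` P) ` O1"
        unfolding elementary_def image_image h_def by simp
      moreover have "(\<lambda>S. \<psi> ` S) ` elementary \<phi> O2 = O2"
        unfolding elementary_def image_image by simp
      ultimately show ?thesis by simp
    qed
    obtain \<tau> where "field_aut_on UNIV \<tau>" "\<forall>t v. h (smul3 t v) = smul3 (\<tau> t) (h v)"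
      using core[OF hbij hadd himg assms(5,6)] by blast
    hence "semilinear_F h" unfolding semilinear_F_def using hbij hadd by blast
    thus "\<exists>g. semilinear_F g \<and> (\<lambda>P. g ` P) ` O1 = O2" using himg by blast
  next
    assume "\<exists>g. semilinear_F g \<and> (\<lambda>P. g ` P) ` O1 = O2"
    then obtain g where sg: "semilinear_F g" and gim: "(\<lambda>P. g ` P) ` O1 = O2" by blast
    obtain \<tau> where gbij: "bij g" and gadd: "\<And>u v. g (vadd3 u v) = vadd3 (g u) (g v)"
      and ta: "field_aut_on UNIV \<tau>" and gsm: "\<And>t v. g (smul3 t v) = smul3 (\<tau> t) (g v)"
      using sg unfolding semilinear_F_def by blast
    have taK: "field_aut_on K \<tau>" by (rule aut_subfield[OF assms(1) ta])
    have tK: "\<tau> t \<in> K" if "t \<in> K" for t using taK that unfolding field_aut_on_def bij_betw_def by blast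
    define f where "f w = \<phi> (g (\<psi> w))" for w
    have fbij: "bij_betw f ?V ?V"
    proof -
      have "bij_betw (\<phi> \<circ> (g \<circ> \<psi>)) ?V ?V"
        by (rule bij_betw_trans[OF bij_betw_trans[OF psibij gbij] phibij])
      moreover have "\<phi> \<circ> (g \<circ> \<psi>) = f" unfolding f_def by (simp add: fun_eq_iff)
      ultimately show ?thesis by simp
    qed
    have fphi: "f (\<phi> v) = \<phi> (g v)" for v unfolding f_def by simp
    have "semilinear_K K (3*n) f" unfolding semilinear_K_def
    proof (intro conjI ballI exI[of _ \<tau>])
      show "bij_betw f ?V ?V" by (rule fbij)
      show "field_aut_on K \<tau>" by (rule taK)
    next
      fix u v assume "u \<in> ?V" "v \<in> ?V"
      then obtain a b where ab: "u = \<phi> a" "v = \<phi> b" using phipsi by metis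
      show "f (\<lambda>i. u i + v i) = (\<lambda>i. f u i + f v i)"
        unfolding ab phiadd[symmetric] fphi gadd ..
    next
      fix t v assume "t \<in> K" "v \<in> ?V"
      then obtain b where b: "v = \<phi> b" using phipsi by metis
      show "f (\<lambda>i. t * v i) = (\<lambda>i. \<tau> t * f v i)"
        unfolding b phism[OF \<open>t \<in> K\<close>, symmetric] fphi gsm phism[OF tK[OF \<open>t \<in> K\<close>]] ..
    qed
    moreover have "(\<lambda>P. f ` P) ` elementary \<phi> O1 = elementary \<phi> O2"
      unfolding elementary_def gim[symmetric] image_image fphi by (simp add: image_image)
    ultimately show "\<exists>f. semilinear_K K (3*n) f \<and> (\<lambda>P. f ` P) ` elementary \<phi> O1 = elementary \<phi> O2"
      by blast
  qed
qed

end
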